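(* Let $f\colon X\to Y$ be a function of metric spaces, $m\ge0$, and let $D^{(m+1)}_f\colon\mathbb R_+\times\mathbb R_+\to\mathbb R_+$ be an $m$-dimensional control function of $f$. Define inductively, for $k>m+1$, $D^{(k)}_f(r_X,R_Y)=D^{(k-1)}_f(3r_X,R_Y)+2r_X$. Then each $D^{(k)}_f$ ($k\ge m+1$) is an $(m,k)$-dimensional control function of $f$.
   Context: For $r>0$, the $r$-components of $C\subset X$ are the equivalence classes of points of $C$ joined by finite sequences in $C$ with consecutive distances $\le r$. An $m$-dimensional control function of $f$ is $D_f\colon\mathbb R_+\times\mathbb R_+\to\mathbb R_+$ such that for all $r_X,R_Y>0$ every $A\subset X$ with $\operatorname{diam} f(A)\le R_Y$ is the union of $m+1$ sets whose $r_X$-components have diameter $\le D_f(r_X,R_Y)$. For $k\ge m+1\ge1$, an $(m,k)$-dimensional control function of $f$ is $D_f\colon\mathbb R_+\times\mathbb R_+\to\mathbb R_+$ such that for all $r_X,R_Y>0$ every $A\subset X$ with $\operatorname{diam} f(A)\le R_Y$ can be written as $A_1\cup\dots\cup A_k$ where the $r_X$-components of each $A_i$ have diameter $\le D_f(r_X,R_Y)$ and every $x\in A$ belongs to at least $k-m$ of the sets $A_i$. *)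

theory Defs
  imports "HOL-Analysis.Analysis"
begin

text \<open>diam S \<le> R, written out literally (sup of distances \<le> R); avoids the
  junk value of the library's diameter on unbounded sets.\<close>
definition diam_le :: "'a::metric_space set \<Rightarrow> real \<Rightarrow> bool" where
  "diam_le S R \<longleftrightarrow> (\<forall>x\<in>S. \<forall>y\<in>S. dist x y \<le> R)"

definition r_component :: "real \<Rightarrow> 'a::metric_space set \<Rightarrow> 'a \<Rightarrow> 'a set" where
  "r_component r C x = {y \<in> C. (\<lambda>a b. a \<in> C \<and> b \<in> C \<and> dist a b \<le> r)\<^sup>*\<^sup>* x y}"

definition r_components :: "real \<Rightarrow> 'a::metric_space set \<Rightarrow> 'a set set" where
  "r_components r C = r_component r C ` C"

definition components_bounded :: "real \<Rightarrow> real \<Rightarrow> 'a::metric_space set \<Rightarrow> bool" where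
  "components_bounded r D C \<longleftrightarrow> (\<forall>K \<in> r_components r C. diam_le K D)"

text \<open>D : R+ x R+ -> R+ (we read R+ as the nonnegative reals on values; arguments positive).\<close>
definition control_range :: "(real \<Rightarrow> real \<Rightarrow> real) \<Rightarrow> bool" where
  "control_range D \<longleftrightarrow> (\<forall>r>0. \<forall>R>0. D r R \<ge> 0)"

definition dim_control ::
  "('a::metric_space \<Rightarrow> 'b::metric_space) \<Rightarrow> nat \<Rightarrow> (real \<Rightarrow> real \<Rightarrow> real) \<Rightarrow> bool" where
  "dim_control f m D \<longleftrightarrow> control_range D \<and>
     (\<forall>r>0. \<forall>R>0. \<forall>A. diam_le (f ` A) R \<longrightarrow>
        (\<exists>U :: nat \<Rightarrow> 'a set. A = (\<Union>i\<le>m. U i) \<and>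
           (\<forall>i\<le>m. components_bounded r (D r R) (U i))))"

definition mk_dim_control ::
  "('a::metric_space \<Rightarrow> 'b::metric_space) \<Rightarrow> nat \<Rightarrow> nat \<Rightarrow> (real \<Rightarrow> real \<Rightarrow> real) \<Rightarrow> bool" where
  "mk_dim_control f m k D \<longleftrightarrow> control_range D \<and>
     (\<forall>r>0. \<forall>R>0. \<forall>A. diam_le (f ` A) R \<longrightarrow>
        (\<exists>U :: nat \<Rightarrow> 'a set. A = (\<Union>i\<in>{1..k}. U i) \<and>
           (\<forall>i\<in>{1..k}. components_bounded r (D r R) (U i)) \<and>
           (\<forall>x\<in>A. card {i\<in>{1..k}. x \<in> U i} \<ge> k - m)))"

text \<open>D_iter D j = D^{(m+1+j)}: D^{(k)}(r,R) = D^{(k-1)}(3r,R) + 2r.\<close>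
primrec D_iter :: "(real \<Rightarrow> real \<Rightarrow> real) \<Rightarrow> nat \<Rightarrow> real \<Rightarrow> real \<Rightarrow> real" where
  "D_iter D 0 = D"
| "D_iter D (Suc j) = (\<lambda>r R. D_iter D j (3 * r) R + 2 * r)"

end

theory Submission
  imports Defs
begin

lemma rt_sym:
  assumes "R\<^sup>*\<^sup>* x y" and "\<And>a b. R a b \<Longrightarrow> R b a"
  shows "R\<^sup>*\<^sup>* y x"
  using assms(1)
proof (induction rule: rtranclp_induct)
  case base then show ?case by simp
next
  case (step y z)
  then show ?case using assms(2) by (meson converse_rtranclp_into_rtranclp)
qed

lemma rt_transfer:
  assumes "R\<^sup>*\<^sup>* x y" and "P x" and "\<And>a b. R a b \<Longrightarrow> P a \<Longrightarrow> P b \<and> Q a b"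
  shows "Q\<^sup>*\<^sup>* x y \<and> P y"
  using assms(1)
proof (induction rule: rtranclp_induct)
  case base then show ?case using assms(2) by simp
next
  case (step y z)
  then show ?case using assms(3) by (meson rtranclp.rtrancl_into_rtrancl)
qed

lemma rt_map:
  assumes "R\<^sup>*\<^sup>* x y" and "\<And>a b. R a b \<Longrightarrow> Q (g a) (g b)"
  shows "Q\<^sup>*\<^sup>* (g x) (g y)"
  using assms(1)
proof (induction rule: rtranclp_induct)
  case base then show ?case by simp
next
  case (step y z)
  then show ?case using assms(2) by (meson rtranclp.rtrancl_into_rtrancl)
qed

lemma cb_iff:
  "components_bounded r D C \<longleftrightarrow>
   (\<forall>x\<in>C. \<forall>y. (\<lambda>a b. a \<in> C \<and> b \<in> C \<and> dist a b \<le> r)\<^sup>*\<^sup>* x y \<longrightarrow> dist x y \<le> D)"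
  (is "?L \<longleftrightarrow> ?R")
proof
  assume L: ?L
  show ?R
  proof (intro ballI allI impI)
    fix x y assume x: "x \<in> C" and xy: "(\<lambda>a b. a \<in> C \<and> b \<in> C \<and> dist a b \<le> r)\<^sup>*\<^sup>* x y"
    have yC: "y \<in> C"
      using rt_transfer[OF xy, of "\<lambda>a. a \<in> C" "\<lambda>_ _. True"] x by blast
    have K: "r_component r C x \<in> r_components r C" using x unfolding r_components_def by blast
    have "x \<in> r_component r C x" "y \<in> r_component r C x"
      using x yC xy unfolding r_component_def by auto
    then show "dist x y \<le> D" using L K unfolding components_bounded_def diam_le_def by blast
  qed
next
  assume R: ?R
  show ?L unfolding components_bounded_def diam_le_def r_components_def
  proof (intro ballI)
    fix K y z assume KK: "K \<in> r_component r C ` C" and y: "y \<in> K" and z: "z \<in> K"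
    from KK obtain x where x: "x \<in> C" and K: "K = r_component r C x" by blast
    let ?Q = "\<lambda>a b. a \<in> C \<and> b \<in> C \<and> dist a b \<le> r"
    have xy: "?Q\<^sup>*\<^sup>* x y" and xz: "?Q\<^sup>*\<^sup>* x z" and yC: "y \<in> C"
      using y z K unfolding r_component_def by auto
    have "?Q\<^sup>*\<^sup>* y x" by (rule rt_sym[OF xy]) (auto simp: dist_commute)
    then have "?Q\<^sup>*\<^sup>* y z" using xz by auto
    then show "dist y z \<le> D" using R yC by blast
  qed
qed

lemma step:
  assumes H: "mk_dim_control f m k Dk" and km: "k \<ge> m+1"
  shows "mk_dim_control f m (Suc k) (\<lambda>r R. Dk (3*r) R + 2*r)"
  unfolding mk_dim_control_def
proof (intro conjI allI impI)
  have cr: "control_range Dk" and H2: "\<forall>r>0. \<forall>R>0. \<forall>A. diam_le (f ` A) R \<longrightarrow>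
        (\<exists>U :: nat \<Rightarrow> 'a set. A = (\<Union>i\<in>{1..k}. U i) \<and>
           (\<forall>i\<in>{1..k}. components_bounded r (Dk r R) (U i)) \<and>
           (\<forall>x\<in>A. card {i\<in>{1..k}. x \<in> U i} \<ge> k - m))"
    using H unfolding mk_dim_control_def by auto
  show "control_range (\<lambda>r R. Dk (3*r) R + 2*r)"
    unfolding control_range_def
  proof (intro allI impI)
    fix r R :: real assume r: "r > 0" and R: "R > 0"
    then have "3*r > 0" by simp
    then have "Dk (3*r) R \<ge> 0" using cr R unfolding control_range_def by blast
    then show "Dk (3*r) R + 2*r \<ge> 0" using r by simp
  qed
  fix r R :: real and A :: "'a set"
  assume r: "r > 0" and RR: "R > 0" and dA: "diam_le (f ` A) R"
  have r3: "3*r > 0" using r by simp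
  obtain U where UA: "A = (\<Union>i\<in>{1..k}. U i)"
    and Ub: "\<forall>i\<in>{1..k}. components_bounded (3*r) (Dk (3*r) R) (U i)"
    and Uc: "\<forall>x\<in>A. card {i\<in>{1..k}. x \<in> U i} \<ge> k - m"
    using H2[rule_format, OF r3 RR dA] by (elim exE conjE)
  define B where "B i = {x\<in>A. \<exists>a\<in>U i. dist x a \<le> r}" for i
  define C where "C = {x\<in>A. card {i\<in>{1..k}. x \<in> B i} = k - m}"
  define V where "V i = (if i = Suc k then C else B i)" for i
  have UB: "U i \<subseteq> B i" if "i \<in> {1..k}" for i
  proof
    fix x assume xU: "x \<in> U i"
    then have "x \<in> A" using that UA by auto
    moreover have "dist x x \<le> r" using r by simp
    ultimately show "x \<in> B i" using xU unfolding B_def by blast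
  qed
  have SC: "x \<in> U j" if "x \<in> C" "x \<in> B j" "j \<in> {1..k}" for x j
  proof -
    have xA: "x \<in> A" using that C_def by auto
    have sub: "{i\<in>{1..k}. x \<in> U i} \<subseteq> {i\<in>{1..k}. x \<in> B i}" using UB by auto
    have "card {i\<in>{1..k}. x \<in> U i} \<ge> card {i\<in>{1..k}. x \<in> B i}"
      using Uc xA that(1) unfolding C_def by auto
    moreover have "card {i\<in>{1..k}. x \<in> U i} \<le> card {i\<in>{1..k}. x \<in> B i}"
      using sub by (intro card_mono) auto
    ultimately have "card {i\<in>{1..k}. x \<in> U i} = card {i\<in>{1..k}. x \<in> B i}" by (rule antisym[rotated])
    then have "{i\<in>{1..k}. x \<in> U i} = {i\<in>{1..k}. x \<in> B i}"
      using sub by (intro card_subset_eq) auto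
    then show ?thesis using that by auto
  qed
  show "\<exists>U :: nat \<Rightarrow> 'a set. A = (\<Union>i\<in>{1..Suc k}. U i) \<and>
           (\<forall>i\<in>{1..Suc k}. components_bounded r (Dk (3*r) R + 2*r) (U i)) \<and>
           (\<forall>x\<in>A. card {i\<in>{1..Suc k}. x \<in> U i} \<ge> Suc k - m)"
  proof (intro exI[of _ V] conjI ballI)
    show "A = (\<Union>i\<in>{1..Suc k}. V i)"
    proof
      show "A \<subseteq> (\<Union>i\<in>{1..Suc k}. V i)"
      proof
        fix x assume "x \<in> A"
        then obtain i where "i \<in> {1..k}" "x \<in> U i" using UA by auto
        then show "x \<in> (\<Union>i\<in>{1..Suc k}. V i)" using UB unfolding V_def
          by (intro UN_I[of i]) auto
      qed
      show "(\<Union>i\<in>{1..Suc k}. V i) \<subseteq> A" unfolding V_def B_def C_def by auto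
    qed
  next
    fix i assume i: "i \<in> {1..Suc k}"
    show "components_bounded r (Dk (3*r) R + 2*r) (V i)"
    proof (cases "i = Suc k")
      case True
      then have Vi: "V i = C" by (simp add: V_def)
      show ?thesis unfolding Vi cb_iff
      proof (intro ballI allI impI)
        fix x y assume x: "x \<in> C"
          and xy: "(\<lambda>a b. a \<in> C \<and> b \<in> C \<and> dist a b \<le> r)\<^sup>*\<^sup>* x y"
        have "card {i\<in>{1..k}. x \<in> B i} = k - m" using x C_def by auto
        moreover have "k - m > 0" using km by simp
        ultimately have "{i\<in>{1..k}. x \<in> B i} \<noteq> {}" by (metis card.empty less_irrefl)
        then obtain j where j: "j \<in> {1..k}" "x \<in> B j" by auto
        then have xU: "x \<in> U j" using SC x by blast
        have "(\<lambda>a b. a \<in> U j \<and> b \<in> U j \<and> dist a b \<le> 3*r)\<^sup>*\<^sup>* x y \<and> (y \<in> C \<and> y \<in> U j)"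
        proof (rule rt_transfer[OF xy])
          show "x \<in> C \<and> x \<in> U j" using x xU by simp
        next
          fix a b assume ab: "a \<in> C \<and> b \<in> C \<and> dist a b \<le> r" and a: "a \<in> C \<and> a \<in> U j"
          have "b \<in> B j" unfolding B_def using ab a C_def by (auto simp: dist_commute intro!: bexI[of _ a])
          then have "b \<in> U j" using SC ab j by blast
          then show "(b \<in> C \<and> b \<in> U j) \<and> (a \<in> U j \<and> b \<in> U j \<and> dist a b \<le> 3*r)"
            using ab a r by auto
        qed
        then have "dist x y \<le> Dk (3*r) R" using Ub j xU unfolding cb_iff by blast
        then show "dist x y \<le> Dk (3*r) R + 2*r" using r by simp
      qed
    next
      case False
      then have Vi: "V i = B i" and ik: "i \<in> {1..k}" using i by (auto simp: V_def)
      define g where "g x = (SOME a. a \<in> U i \<and> dist x a \<le> r)" for x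
      have g: "g x \<in> U i \<and> dist x (g x) \<le> r" if "x \<in> B i" for x
      proof -
        from that obtain a where "a \<in> U i \<and> dist x a \<le> r" unfolding B_def by auto
        then show ?thesis unfolding g_def by (rule someI)
      qed
      show ?thesis unfolding Vi cb_iff
      proof (intro ballI allI impI)
        fix x y assume x: "x \<in> B i"
          and xy: "(\<lambda>a b. a \<in> B i \<and> b \<in> B i \<and> dist a b \<le> r)\<^sup>*\<^sup>* x y"
        have y: "y \<in> B i"
          using rt_transfer[OF xy, of "\<lambda>a. a \<in> B i" "\<lambda>_ _. True"] x by blast
        have "(\<lambda>a b. a \<in> U i \<and> b \<in> U i \<and> dist a b \<le> 3*r)\<^sup>*\<^sup>* (g x) (g y)"
        proof (rule rt_map[OF xy])
          fix a b assume ab: "a \<in> B i \<and> b \<in> B i \<and> dist a b \<le> r"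
          have t1: "dist (g a) (g b) \<le> dist (g a) a + dist a (g b)" by (rule dist_triangle)
          have t2: "dist a (g b) \<le> dist a b + dist b (g b)" by (rule dist_triangle)
          have "dist (g a) (g b) \<le> dist (g a) a + dist a b + dist b (g b)" using t1 t2 by linarith
          also have "\<dots> \<le> 3*r" using g[of a] g[of b] ab by (simp add: dist_commute)
          finally show "g a \<in> U i \<and> g b \<in> U i \<and> dist (g a) (g b) \<le> 3*r" using g ab by blast
        qed
        then have "dist (g x) (g y) \<le> Dk (3*r) R" using Ub ik g[OF x] unfolding cb_iff by blast
        moreover have "dist x y \<le> dist x (g x) + dist (g x) (g y) + dist (g y) y"
        proof -
          have t1: "dist x y \<le> dist x (g x) + dist (g x) y" by (rule dist_triangle)
          have t2: "dist (g x) y \<le> dist (g x) (g y) + dist (g y) y" by (rule dist_triangle)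
          show ?thesis using t1 t2 by linarith
        qed
        ultimately show "dist x y \<le> Dk (3*r) R + 2*r" using g[OF x] g[OF y]
          by (simp add: dist_commute)
      qed
    qed
  next
    fix x assume xA: "x \<in> A"
    let ?S = "{i\<in>{1..k}. x \<in> B i}"
    let ?T = "{i\<in>{1..k}. x \<in> U i}"
    have fin: "finite ?S" by simp
    have TS: "card ?T \<le> card ?S" using UB by (intro card_mono) auto
    have SV: "?S \<subseteq> {i\<in>{1..Suc k}. x \<in> V i}" unfolding V_def by auto
    show "card {i\<in>{1..Suc k}. x \<in> V i} \<ge> Suc k - m"
    proof (cases "x \<in> C")
      case True
      then have "insert (Suc k) ?S \<subseteq> {i\<in>{1..Suc k}. x \<in> V i}" using SV unfolding V_def by auto
      then have "card (insert (Suc k) ?S) \<le> card {i\<in>{1..Suc k}. x \<in> V i}"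
        by (intro card_mono) auto
      moreover have "card (insert (Suc k) ?S) = Suc (card ?S)" using fin by simp
      moreover have "card ?S = k - m" using True C_def by auto
      ultimately show ?thesis using km by linarith
    next
      case False
      then have "card ?S \<noteq> k - m" using xA C_def by auto
      moreover have "card ?S \<le> card {i\<in>{1..Suc k}. x \<in> V i}" using SV by (intro card_mono) auto
      moreover have "card ?T \<ge> k - m" using Uc xA by blast
      ultimately show ?thesis using TS km by linarith
    qed
  qed
qed

lemma base:
  assumes "dim_control f m D"
  shows "mk_dim_control f m (m+1) D"
  unfolding mk_dim_control_def
proof (intro conjI allI impI)
  show "control_range D" using assms dim_control_def by blast
  fix r R :: real and A :: "'a set"
  assume r: "r > 0" and RR: "R > 0" and dA: "diam_le (f ` A) R"
  obtain U where UA: "A = (\<Union>i\<le>m. U i)" and Ub: "\<forall>i\<le>m. components_bounded r (D r R) (U i)"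
    using assms r RR dA unfolding dim_control_def by blast
  show "\<exists>U :: nat \<Rightarrow> 'a set. A = (\<Union>i\<in>{1..m+1}. U i) \<and>
           (\<forall>i\<in>{1..m+1}. components_bounded r (D r R) (U i)) \<and>
           (\<forall>x\<in>A. card {i\<in>{1..m+1}. x \<in> U i} \<ge> m + 1 - m)"
  proof (intro exI[of _ "\<lambda>i. U (i - 1)"] conjI ballI)
    show "A = (\<Union>i\<in>{1..m+1}. U (i - 1))"
    proof
      show "A \<subseteq> (\<Union>i\<in>{1..m+1}. U (i - 1))"
      proof
        fix x assume "x \<in> A"
        then obtain j where "j \<le> m" "x \<in> U j" using UA by auto
        then show "x \<in> (\<Union>i\<in>{1..m+1}. U (i - 1))" by (intro UN_I[of "Suc j"]) auto
      qed
      show "(\<Union>i\<in>{1..m+1}. U (i - 1)) \<subseteq> A"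
      proof
        fix x assume "x \<in> (\<Union>i\<in>{1..m+1}. U (i - 1))"
        then obtain i where "i \<in> {1..m+1}" "x \<in> U (i - 1)" by blast
        then have "i - 1 \<le> m" "x \<in> U (i - 1)" by auto
        then show "x \<in> A" using UA by blast
      qed
    qed
  next
    fix i assume "i \<in> {1..m+1}"
    then show "components_bounded r (D r R) (U (i - 1))" using Ub by auto
  next
    fix x assume "x \<in> A"
    then obtain j where j: "j \<le> m" "x \<in> U j" using UA by auto
    then have "Suc j \<in> {i\<in>{1..m+1}. x \<in> U (i - 1)}" by auto
    then have "card {i\<in>{1..m+1}. x \<in> U (i - 1)} > 0"
      by (auto simp: card_gt_0_iff)
    then show "card {i\<in>{1..m+1}. x \<in> U (i - 1)} \<ge> m + 1 - m" by simp
  qed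
qed

theorem mainTheorem13:
  fixes f :: "'a::metric_space \<Rightarrow> 'b::metric_space" and m :: nat
    and D :: "real \<Rightarrow> real \<Rightarrow> real"
  assumes "dim_control f m D"
  shows "\<forall>k\<ge>m+1. mk_dim_control f m k (D_iter D (k - (m+1)))"
proof -
  have all: "mk_dim_control f m (m+1+j) (D_iter D j)" for j
  proof (induction j)
    case 0 then show ?case using base[OF assms] by simp
  next
    case (Suc j)
    have "mk_dim_control f m (Suc (m+1+j)) (\<lambda>r R. D_iter D j (3*r) R + 2*r)"
      by (rule step[OF Suc]) simp
    then show ?case by simp
  qed
  show ?thesis
  proof (intro allI impI)
    fix k assume "k \<ge> m+1"
    then obtain j where "k = m+1+j" by (metis le_add_diff_inverse)
    then show "mk_dim_control f m k (D_iter D (k - (m+1)))" using all[of j] by simp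
  qed
qed

end
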